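(* Let $a,b$ be integers with $b>a>2$ and $\gcd(a,b)=1$. Then for every integer $c\geq (a-1)(b-1)$ there exists a tame polynomial automorphism $F$ of $\mathbb{C}^3$ with $\operatorname{mdeg}F=(a,b,c)$.
   Context: For a polynomial automorphism $F=(F_1,\ldots,F_n)$ of $\mathbb{C}^n$, its multidegree is $\operatorname{mdeg}F:=(\deg F_1,\ldots,\deg F_n)$, where $\deg$ is total degree. A map $F=(F_1,\ldots,F_n)$ is elementary if for some $j\leq n$ and some polynomial $g$ in $n-1$ variables, $F_j=X_j+g(X_1,\ldots,\widehat{X_j},\ldots,X_n)$ and $F_i=X_i$ for $i\neq j$. A polynomial automorphism is tame if it is a composition of invertible affine-linear maps and elementary maps. *)

theory Defs
  imports Complex_Main
begin

type_synonym pt3 = "complex \<times> complex \<times> complex"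

text \<open>Polynomials in X1,X2,X3 over C as coefficient functions on exponent triples with finite support.\<close>

definition poly3_eval :: "(nat \<times> nat \<times> nat \<Rightarrow> complex) \<Rightarrow> pt3 \<Rightarrow> complex" where
  "poly3_eval c = (\<lambda>(x,y,z). \<Sum>m\<in>{m. c m \<noteq> 0}.
       c m * x ^ fst m * y ^ fst (snd m) * z ^ snd (snd m))"

definition is_poly3 :: "(pt3 \<Rightarrow> complex) \<Rightarrow> bool" where
  "is_poly3 f \<longleftrightarrow> (\<exists>c. finite {m. c m \<noteq> 0} \<and> f = poly3_eval c)"

text \<open>Total degree of a polynomial function (coefficients are unique over C);
  the zero polynomial gets degree 0 by convention (irrelevant here).\<close>
definition tdeg :: "(pt3 \<Rightarrow> complex) \<Rightarrow> nat" where
  "tdeg f = (THE d. \<exists>c. finite {m. c m \<noteq> 0} \<and> f = poly3_eval c \<and>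
       d = Max ({fst m + fst (snd m) + snd (snd m) | m. c m \<noteq> 0} \<union> {0}))"

definition mdeg :: "(pt3 \<Rightarrow> pt3) \<Rightarrow> nat \<times> nat \<times> nat" where
  "mdeg F = (tdeg (\<lambda>v. fst (F v)), tdeg (\<lambda>v. fst (snd (F v))), tdeg (\<lambda>v. snd (snd (F v))))"

definition affine_aut :: "(pt3 \<Rightarrow> pt3) \<Rightarrow> bool" where
  "affine_aut F \<longleftrightarrow> (\<exists>a11 a12 a13 a21 a22 a23 a31 a32 a33 b1 b2 b3 :: complex.
     a11*(a22*a33 - a23*a32) - a12*(a21*a33 - a23*a31) + a13*(a21*a32 - a22*a31) \<noteq> 0 \<and>
     F = (\<lambda>(x,y,z). (a11*x + a12*y + a13*z + b1,
                      a21*x + a22*y + a23*z + b2,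
                      a31*x + a32*y + a33*z + b3)))"

definition elementary :: "(pt3 \<Rightarrow> pt3) \<Rightarrow> bool" where
  "elementary F \<longleftrightarrow> (\<exists>g :: complex \<times> complex \<Rightarrow> complex.
      is_poly3 (\<lambda>(x,y,z). g (y,z)) \<and> F = (\<lambda>(x,y,z). (x + g (y,z), y, z)))
   \<or> (\<exists>g :: complex \<times> complex \<Rightarrow> complex.
      is_poly3 (\<lambda>(x,y,z). g (x,z)) \<and> F = (\<lambda>(x,y,z). (x, y + g (x,z), z)))
   \<or> (\<exists>g :: complex \<times> complex \<Rightarrow> complex.
      is_poly3 (\<lambda>(x,y,z). g (x,y)) \<and> F = (\<lambda>(x,y,z). (x, y, z + g (x,y))))"

inductive_set tame :: "(pt3 \<Rightarrow> pt3) set" where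
  affine: "affine_aut F \<Longrightarrow> F \<in> tame"
| elem: "elementary F \<Longrightarrow> F \<in> tame"
| comp: "F \<in> tame \<Longrightarrow> G \<in> tame \<Longrightarrow> F \<circ> G \<in> tame"

end

theory Submission
  imports Defs "HOL-Computational_Algebra.Polynomial"
begin

definition mono3 :: "nat \<times> nat \<times> nat \<Rightarrow> pt3 \<Rightarrow> complex" where
  "mono3 m v = fst v ^ fst m * fst (snd v) ^ fst (snd m) * snd (snd v) ^ snd (snd m)"

definition mdg :: "nat \<times> nat \<times> nat \<Rightarrow> nat" where
  "mdg m = fst m + fst (snd m) + snd (snd m)"

lemma poly3_eval_alt: "poly3_eval c v = (\<Sum>m\<in>{m. c m \<noteq> 0}. c m * mono3 m v)"
  by (cases v) (simp add: poly3_eval_def mono3_def mult.assoc)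

lemma eval_superset:
  assumes "finite S" "{m. c m \<noteq> 0} \<subseteq> S"
  shows "poly3_eval c v = (\<Sum>m\<in>S. c m * mono3 m v)"
  unfolding poly3_eval_alt
  by (rule sum.mono_neutral_left) (use assms in auto)

lemma conv:
  assumes "finite I"
  shows "\<exists>c. finite {m. c m \<noteq> 0} \<and> {m. c m \<noteq> 0} \<subseteq> e ` I \<and>
     (\<forall>v. (\<Sum>i\<in>I. w i * mono3 (e i) v) = poly3_eval c v)"
proof -
  define c where "c m = (\<Sum>i\<in>{i\<in>I. e i = m}. w i)" for m
  have sub: "{m. c m \<noteq> 0} \<subseteq> e ` I"
  proof
    fix m assume "m \<in> {m. c m \<noteq> 0}"
    then have "c m \<noteq> 0" by simp
    moreover have "m \<notin> e ` I \<Longrightarrow> {i\<in>I. e i = m} = {}" by auto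
    ultimately show "m \<in> e ` I" unfolding c_def by fastforce
  qed
  have fin: "finite {m. c m \<noteq> 0}" using sub assms finite_subset by blast
  have "poly3_eval c v = (\<Sum>i\<in>I. w i * mono3 (e i) v)" for v
  proof -
    have "poly3_eval c v = (\<Sum>m\<in>e ` I. c m * mono3 m v)"
      by (rule eval_superset) (use assms sub in auto)
    also have "\<dots> = (\<Sum>m\<in>e ` I. \<Sum>i\<in>{i\<in>I. e i = m}. w i * mono3 (e i) v)"
      unfolding c_def sum_distrib_right by (intro sum.cong refl) auto
    also have "\<dots> = (\<Sum>i\<in>I. w i * mono3 (e i) v)"
      by (rule sum.group) (use assms in auto)
    finally show ?thesis .
  qed
  then show ?thesis using fin sub by metis
qed

lemma uniq0:
  assumes fin: "finite {m. c m \<noteq> 0}" and z: "\<And>v. poly3_eval c v = 0"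
  shows "c m = 0"
proof -
  define S where "S = {m. c m \<noteq> 0}"
  define N where "N = Max (insert 0 (mdg ` S))"
  have bnd: "fst m \<le> N \<and> fst (snd m) \<le> N \<and> snd (snd m) \<le> N" if "m \<in> S" for m
  proof -
    have "mdg m \<le> N" unfolding N_def using that fin S_def by (intro Max_ge) auto
    then show ?thesis unfolding mdg_def by auto
  qed
  define B where "B = {..N} \<times> {..N} \<times> {..N}"
  have SB: "S \<subseteq> B" using bnd unfolding B_def by auto
  have H: "(\<Sum>k\<le>N. (\<Sum>j\<le>N. (\<Sum>i\<le>N. c (i,j,k) * x^i) * y^j) * z^k) = 0" for x y z
  proof -
    have "poly3_eval c (x,y,z) = (\<Sum>m\<in>B. c m * mono3 m (x,y,z))"
      by (rule eval_superset) (use SB S_def B_def in auto)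
    also have "\<dots> = (\<Sum>i\<le>N. \<Sum>j\<le>N. \<Sum>k\<le>N. c (i,j,k) * (x^i * y^j * z^k))"
      unfolding B_def by (simp add: sum.cartesian_product mono3_def case_prod_beta)
    also have "\<dots> = (\<Sum>i\<le>N. \<Sum>k\<le>N. \<Sum>j\<le>N. c (i,j,k) * (x^i * y^j * z^k))"
      by (rule sum.cong[OF refl]) (rule sum.swap)
    also have "\<dots> = (\<Sum>k\<le>N. \<Sum>i\<le>N. \<Sum>j\<le>N. c (i,j,k) * (x^i * y^j * z^k))"
      by (rule sum.swap)
    also have "\<dots> = (\<Sum>k\<le>N. \<Sum>j\<le>N. \<Sum>i\<le>N. c (i,j,k) * (x^i * y^j * z^k))"
      by (rule sum.cong[OF refl]) (rule sum.swap)
    also have "\<dots> = (\<Sum>k\<le>N. (\<Sum>j\<le>N. (\<Sum>i\<le>N. c (i,j,k) * x^i) * y^j) * z^k)"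
      by (simp add: sum_distrib_left sum_distrib_right mult_ac)
    finally show ?thesis using z by simp
  qed
  show ?thesis
  proof (cases "m \<in> S")
    case False then show ?thesis unfolding S_def by auto
  next
    case True
    obtain i j k where m: "m = (i,j,k)" by (cases m) auto
    from bnd[OF True] m have ijk: "i \<le> N" "j \<le> N" "k \<le> N" by auto
    have "\<forall>k\<le>N. (\<Sum>j\<le>N. (\<Sum>i\<le>N. c (i,j,k) * x^i) * y^j) = 0" for x y
      using polyfun_eq_0[of "\<lambda>k. (\<Sum>j\<le>N. (\<Sum>i\<le>N. c (i,j,k) * x^i) * y^j)" N] H by blast
    then have "\<forall>j\<le>N. (\<Sum>i\<le>N. c (i,j,k) * x^i) = 0" for x
      using polyfun_eq_0[of "\<lambda>j. (\<Sum>i\<le>N. c (i,j,k) * x^i)" N] ijk by blast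
    then have "\<forall>i\<le>N. c (i,j,k) = 0"
      using polyfun_eq_0[of "\<lambda>i. c (i,j,k)" N] ijk by blast
    then show ?thesis using m ijk by simp
  qed
qed

lemma uniq:
  assumes "finite {m. c1 m \<noteq> 0}" "finite {m. c2 m \<noteq> 0}" "poly3_eval c1 = poly3_eval c2"
  shows "c1 = c2"
proof -
  define S where "S = {m. c1 m \<noteq> 0} \<union> {m. c2 m \<noteq> 0}"
  have fS: "finite S" using assms S_def by auto
  have "finite {m. c1 m - c2 m \<noteq> 0}" by (rule finite_subset[OF _ fS]) (auto simp: S_def)
  moreover have "poly3_eval (\<lambda>m. c1 m - c2 m) v = 0" for v
  proof -
    have "poly3_eval (\<lambda>m. c1 m - c2 m) v = (\<Sum>m\<in>S. (c1 m - c2 m) * mono3 m v)"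
      by (rule eval_superset) (use fS S_def in auto)
    also have "\<dots> = poly3_eval c1 v - poly3_eval c2 v"
      by (simp add: left_diff_distrib sum_subtractf eval_superset[OF fS] S_def)
    finally show ?thesis using assms(3) by simp
  qed
  ultimately have "c1 m - c2 m = 0" for m using uniq0[of "\<lambda>m. c1 m - c2 m"] by blast
  then show ?thesis by auto
qed

lemma mono3_scale: "mono3 m (t*x, t*y, t*z) = t ^ mdg m * mono3 m (x,y,z)"
  by (simp add: mono3_def mdg_def power_mult_distrib power_add mult_ac)

lemma tdeg_eq:
  assumes fin: "finite {m. c m \<noteq> 0}" and f: "f = poly3_eval c"
    and up: "\<And>m. c m \<noteq> 0 \<Longrightarrow> mdg m \<le> d"
    and line: "\<And>t. f (t*x0, t*y0, t*z0) = poly p t" and dp: "degree p = d"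
  shows "tdeg f = d"
proof -
  define M where "M = {fst m + fst (snd m) + snd (snd m) | m. c m \<noteq> 0} \<union> {0}"
  have M': "M = insert 0 (mdg ` {m. c m \<noteq> 0})" unfolding M_def mdg_def image_def by blast
  have fM: "finite M" unfolding M' using fin by auto
  have le: "Max M \<le> d" using fM up by (auto simp: M' intro!: Max.boundedI)
  define q where "q = (\<Sum>m\<in>{m. c m \<noteq> 0}. monom (c m * mono3 m (x0,y0,z0)) (mdg m))"
  have "poly q t = poly p t" for t
  proof -
    have "poly q t = (\<Sum>m\<in>{m. c m \<noteq> 0}. c m * mono3 m (t*x0,t*y0,t*z0))"
      unfolding q_def by (simp add: poly_sum poly_monom mono3_scale mult_ac)
    also have "\<dots> = f (t*x0, t*y0, t*z0)" by (simp add: f poly3_eval_alt)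
    finally show ?thesis using line by simp
  qed
  then have "q = p" using poly_eq_poly_eq_iff by blast
  moreover have "degree q \<le> Max M"
    unfolding q_def
  proof (rule degree_sum_le[OF fin])
    fix m assume "m \<in> {m. c m \<noteq> 0}"
    then have "mdg m \<le> Max M" using fM by (intro Max_ge) (auto simp: M')
    then show "degree (monom (c m * mono3 m (x0, y0, z0)) (mdg m)) \<le> Max M"
      using degree_monom_le order_trans by blast
  qed
  ultimately have MM: "Max M = d" using le dp by simp
  show ?thesis unfolding tdeg_def
  proof (rule the_equality)
    show "\<exists>c. finite {m. c m \<noteq> 0} \<and> f = poly3_eval c \<and>
      d = Max ({fst m + fst (snd m) + snd (snd m) |m. c m \<noteq> 0} \<union> {0})"
      using fin f MM M_def by blast
  next
    fix d' assume "\<exists>c'. finite {m. c' m \<noteq> 0} \<and> f = poly3_eval c' \<and>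
      d' = Max ({fst m + fst (snd m) + snd (snd m) |m. c' m \<noteq> 0} \<union> {0})"
    then obtain c' where c': "finite {m. c' m \<noteq> 0}" "f = poly3_eval c'"
      "d' = Max ({fst m + fst (snd m) + snd (snd m) |m. c' m \<noteq> 0} \<union> {0})" by blast
    have "c' = c" using uniq[of c' c] c'(1,2) fin f by simp
    then show "d' = d" using MM M_def c'(3) by simp
  qed
qed

definition polyle :: "(pt3 \<Rightarrow> complex) \<Rightarrow> nat \<Rightarrow> bool" where
  "polyle f d \<longleftrightarrow> (\<exists>c. finite {m. c m \<noteq> 0} \<and> f = poly3_eval c \<and> (\<forall>m. c m \<noteq> 0 \<longrightarrow> mdg m \<le> d))"

lemma polyle_I:
  assumes "finite I" "\<And>i. i \<in> I \<Longrightarrow> mdg (e i) \<le> d"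
    "\<And>v. f v = (\<Sum>i\<in>I. w i * mono3 (e i) v)"
  shows "polyle f d"
proof -
  obtain c where c: "finite {m. c m \<noteq> 0}" "{m. c m \<noteq> 0} \<subseteq> e ` I"
     "\<forall>v. (\<Sum>i\<in>I. w i * mono3 (e i) v) = poly3_eval c v"
    using conv[OF assms(1), of e w] by blast
  have "f = poly3_eval c" using c(3) assms(3) by auto
  moreover have "\<forall>m. c m \<noteq> 0 \<longrightarrow> mdg m \<le> d" using c(2) assms(2) by blast
  ultimately show ?thesis using c(1) unfolding polyle_def by blast
qed

lemma polyle_E:
  assumes "polyle f d"
  obtains S c where "finite S" "\<And>m. m \<in> S \<Longrightarrow> mdg m \<le> d"
    "\<And>v. f v = (\<Sum>m\<in>S. c m * mono3 m v)"
  using assms unfolding polyle_def poly3_eval_alt by blast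

lemma polyle_mono: "polyle f d \<Longrightarrow> d \<le> d' \<Longrightarrow> polyle f d'"
  unfolding polyle_def by (blast intro: order_trans)

lemma polyle_const: "polyle (\<lambda>v. k) 0"
  by (rule polyle_I[of "{0::nat}" "\<lambda>_. (0,0,0)" _ _ "\<lambda>_. k"]) (auto simp: mdg_def mono3_def)

lemma polyle_x: "polyle (\<lambda>v. fst v) 1"
  by (rule polyle_I[of "{0::nat}" "\<lambda>_. (1,0,0)" _ _ "\<lambda>_. 1"]) (auto simp: mdg_def mono3_def)
lemma polyle_y: "polyle (\<lambda>v. fst (snd v)) 1"
  by (rule polyle_I[of "{0::nat}" "\<lambda>_. (0,1,0)" _ _ "\<lambda>_. 1"]) (auto simp: mdg_def mono3_def)
lemma polyle_z: "polyle (\<lambda>v. snd (snd v)) 1"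
  by (rule polyle_I[of "{0::nat}" "\<lambda>_. (0,0,1)" _ _ "\<lambda>_. 1"]) (auto simp: mdg_def mono3_def)

lemma polyle_add:
  assumes "polyle f d" "polyle g d"
  shows "polyle (\<lambda>v. f v + g v) d"
proof -
  obtain S1 c1 where 1: "finite S1" "\<And>m. m \<in> S1 \<Longrightarrow> mdg m \<le> d"
    "\<And>v. f v = (\<Sum>m\<in>S1. c1 m * mono3 m v)" using polyle_E[OF assms(1)] by blast
  obtain S2 c2 where 2: "finite S2" "\<And>m. m \<in> S2 \<Longrightarrow> mdg m \<le> d"
    "\<And>v. g v = (\<Sum>m\<in>S2. c2 m * mono3 m v)" using polyle_E[OF assms(2)] by blast
  show ?thesis
  proof (rule polyle_I[of "S1 <+> S2" "case_sum (\<lambda>m. m) (\<lambda>m. m)" d _ "case_sum c1 c2"])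
    show "finite (S1 <+> S2)" using 1 2 by simp
    show "\<And>i. i \<in> S1 <+> S2 \<Longrightarrow> mdg (case_sum (\<lambda>m. m) (\<lambda>m. m) i) \<le> d"
      using 1 2 by auto
    show "\<And>v. f v + g v = (\<Sum>i\<in>S1 <+> S2. case_sum c1 c2 i * mono3 (case_sum (\<lambda>m. m) (\<lambda>m. m) i) v)"
      using 1 2 by (simp add: sum.Plus comp_def)
  qed
qed

definition madd :: "nat \<times> nat \<times> nat \<Rightarrow> nat \<times> nat \<times> nat \<Rightarrow> nat \<times> nat \<times> nat" where
  "madd m n = (fst m + fst n, fst (snd m) + fst (snd n), snd (snd m) + snd (snd n))"

lemma mono3_madd: "mono3 (madd m n) v = mono3 m v * mono3 n v"
  by (simp add: mono3_def madd_def power_add mult_ac)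

lemma polyle_mult:
  assumes "polyle f d" "polyle g e"
  shows "polyle (\<lambda>v. f v * g v) (d + e)"
proof -
  obtain S1 c1 where 1: "finite S1" "\<And>m. m \<in> S1 \<Longrightarrow> mdg m \<le> d"
    "\<And>v. f v = (\<Sum>m\<in>S1. c1 m * mono3 m v)" using polyle_E[OF assms(1)] by blast
  obtain S2 c2 where 2: "finite S2" "\<And>m. m \<in> S2 \<Longrightarrow> mdg m \<le> e"
    "\<And>v. g v = (\<Sum>m\<in>S2. c2 m * mono3 m v)" using polyle_E[OF assms(2)] by blast
  show ?thesis
  proof (rule polyle_I[of "S1 \<times> S2" "\<lambda>(m,n). madd m n" _ _ "\<lambda>(m,n). c1 m * c2 n"])
    show "finite (S1 \<times> S2)" using 1 2 by simp
    show "\<And>i. i \<in> S1 \<times> S2 \<Longrightarrow> mdg ((\<lambda>(m,n). madd m n) i) \<le> d + e"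
      using 1 2 by (fastforce simp: mdg_def madd_def)
    show "\<And>v. f v * g v = (\<Sum>i\<in>S1 \<times> S2. (\<lambda>(m,n). c1 m * c2 n) i * mono3 ((\<lambda>(m,n). madd m n) i) v)"
      by (simp add: 1(3) 2(3) sum_product sum.cartesian_product' mono3_madd mult_ac)
  qed
qed

lemma polyle_pow: "polyle f d \<Longrightarrow> polyle (\<lambda>v. f v ^ n) (d * n)"
proof (induction n)
  case 0 then show ?case using polyle_const[of 1] by simp
next
  case (Suc n)
  have "polyle (\<lambda>v. f v * f v ^ n) (d + d * n)" by (rule polyle_mult) (use Suc in auto)
  then show ?case by (simp add: mult_ac)
qed

lemma polyle_is_poly3: "polyle f d \<Longrightarrow> is_poly3 f"
  unfolding polyle_def is_poly3_def by blast

lemma frob: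
  fixes a b c :: nat
  assumes "2 < a" "a < b" "coprime a b" "(a - 1) * (b - 1) \<le> c"
  shows "\<exists>i j. c = a * i + b * j"
proof -
  have "gcd b a = 1" using assms(3) by (simp add: coprime_iff_gcd_eq_1 gcd.commute)
  then obtain x y where xy: "b * x = a * y + 1" using bezout_nat[of b a] assms by auto
  define j where "j = (x * c) mod a"
  have ja: "j < a" unfolding j_def using assms by simp
  have cong: "(b * j) mod a = c mod a"
  proof -
    have "(b * j) mod a = (b * (x * c)) mod a" unfolding j_def by (simp add: mod_mult_right_eq)
    also have "b * (x * c) = (a * y + 1) * c" using xy by (simp add: mult.assoc[symmetric])
    also have "((a * y + 1) * c) mod a = c mod a" by (simp add: distrib_right mult.assoc)
    finally show ?thesis .
  qed
  have "b * j \<le> c"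
  proof (rule ccontr)
    assume "\<not> b * j \<le> c"
    then have lt: "c < b * j" by simp
    then have "a dvd (b * j - c)" using cong by (simp add: mod_eq_dvd_iff_nat)
    then have "a \<le> b * j - c" using lt by (simp add: dvd_imp_le)
    moreover have "b * j \<le> b * (a - 1)" using ja by (intro mult_le_mono2) simp
    ultimately have "c + a \<le> b * (a - 1)" using lt by linarith
    moreover obtain a' where "a = a' + 1" using assms(1) by (intro that[of "a - 1"]) simp
    moreover obtain b' where "b = b' + 1" using assms(1,2) by (intro that[of "b - 1"]) simp
    ultimately show False using assms(4) by (simp add: algebra_simps)
  qed
  moreover have "a dvd (c - b * j)" using mod_eq_dvd_iff_nat[of "b*j" c a] cong calculation by simp
  ultimately show ?thesis by (metis add.commute dvd_def le_add_diff_inverse)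
qed

lemma tdeg_polyle:
  assumes "polyle f d" "\<And>t. f (t*u, t*v, t*w) = poly p t" "degree p = d"
  shows "tdeg f = d"
  using assms tdeg_eq unfolding polyle_def by metis

theorem fact2:
  fixes a b c :: nat
  assumes "2 < a" and "a < b" and "coprime a b" and "(a - 1) * (b - 1) \<le> c"
  shows "\<exists>F \<in> tame. mdeg F = (a, b, c)"
proof -
  obtain i j where cij: "c = a * i + b * j" using frob[OF assms] by blast
  have "2 * 3 \<le> (a - 1) * (b - 1)" using assms(1,2) by (intro mult_le_mono) auto
  then have c1: "1 < c" using assms(4) by simp
  define g1 :: "complex \<times> complex \<Rightarrow> complex" where "g1 = (\<lambda>(y,z). y ^ a)"
  define g2 :: "complex \<times> complex \<Rightarrow> complex" where "g2 = (\<lambda>(x,z). z ^ b)"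
  define g3 :: "complex \<times> complex \<Rightarrow> complex" where "g3 = (\<lambda>(x,y). x ^ i * y ^ j)"
  define E1 :: "pt3 \<Rightarrow> pt3" where "E1 = (\<lambda>(x,y,z). (x + g1 (y,z), y, z))"
  define E2 :: "pt3 \<Rightarrow> pt3" where "E2 = (\<lambda>(x,y,z). (x, y + g2 (x,z), z))"
  define E3 :: "pt3 \<Rightarrow> pt3" where "E3 = (\<lambda>(x,y,z). (x, y, z + g3 (x,y)))"
  have p1: "is_poly3 (\<lambda>(x,y,z). g1 (y,z))"
  proof -
    have eq: "(\<lambda>(x,y,z). g1 (y,z)) = (\<lambda>v. fst (snd v) ^ a)" by (auto simp: fun_eq_iff g1_def)
    show ?thesis unfolding eq by (rule polyle_is_poly3[OF polyle_pow[OF polyle_y]])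
  qed
  have p2: "is_poly3 (\<lambda>(x,y,z). g2 (x,z))"
  proof -
    have eq: "(\<lambda>(x,y,z). g2 (x,z)) = (\<lambda>v. snd (snd v) ^ b)" by (auto simp: fun_eq_iff g2_def)
    show ?thesis unfolding eq by (rule polyle_is_poly3[OF polyle_pow[OF polyle_z]])
  qed
  have p3: "is_poly3 (\<lambda>(x,y,z). g3 (x,y))"
  proof -
    have eq: "(\<lambda>(x,y,z). g3 (x,y)) = (\<lambda>v. fst v ^ i * fst (snd v) ^ j)" by (auto simp: fun_eq_iff g3_def)
    show ?thesis unfolding eq by (rule polyle_is_poly3[OF polyle_mult[OF polyle_pow[OF polyle_x] polyle_pow[OF polyle_y]]])
  qed
  have "elementary E1" unfolding elementary_def E1_def using p1 by blast
  moreover have "elementary E2" unfolding elementary_def E2_def using p2 by blast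
  moreover have "elementary E3" unfolding elementary_def E3_def using p3 by blast
  ultimately have tm: "E3 \<circ> E2 \<circ> E1 \<in> tame" by (meson tame.comp tame.elem)
  define F :: "pt3 \<Rightarrow> pt3" where
    "F = (\<lambda>(x,y,z). (x + y^a, y + z^b, z + (x + y^a)^i * (y + z^b)^j))"
  have FE: "F = E3 \<circ> E2 \<circ> E1"
    by (auto simp: fun_eq_iff F_def E1_def E2_def E3_def g1_def g2_def g3_def)
  have f1: "(\<lambda>v. fst (F v)) = (\<lambda>v. fst v + fst (snd v) ^ a)"
    by (auto simp: fun_eq_iff F_def)
  have f2: "(\<lambda>v. fst (snd (F v))) = (\<lambda>v. fst (snd v) + snd (snd v) ^ b)"
    by (auto simp: fun_eq_iff F_def)
  have f3: "(\<lambda>v. snd (snd (F v))) = (\<lambda>v. snd (snd v) + (fst v + fst (snd v) ^ a) ^ i * (fst (snd v) + snd (snd v) ^ b) ^ j)"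
    by (auto simp: fun_eq_iff F_def)
  have d1: "tdeg (\<lambda>v. fst (F v)) = a"
    unfolding f1
  proof (rule tdeg_polyle[where u=0 and v=1 and w=0 and p="monom 1 a"])
    show "polyle (\<lambda>v. fst v + fst (snd v) ^ a) a"
      using polyle_add[OF polyle_mono[OF polyle_x] polyle_pow[OF polyle_y, of a]] assms(1) by simp
  qed (auto simp: poly_monom degree_monom_eq)
  have d2: "tdeg (\<lambda>v. fst (snd (F v))) = b"
    unfolding f2
  proof (rule tdeg_polyle[where u=0 and v=0 and w=1 and p="monom 1 b"])
    show "polyle (\<lambda>v. fst (snd v) + snd (snd v) ^ b) b"
      using polyle_add[OF polyle_mono[OF polyle_y] polyle_pow[OF polyle_z, of b]] assms(1,2) by simp
  qed (auto simp: poly_monom degree_monom_eq)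
  define Q :: "complex poly" where "Q = [:0,1:] + monom 1 b"
  have dQ: "degree Q = b" unfolding Q_def using assms
    by (subst degree_add_eq_right) (auto simp: degree_monom_eq)
  have Q0: "Q \<noteq> 0" using dQ assms by auto
  define P where "P = [:0,1:] + monom 1 (a*i) * Q ^ j"
  have dP: "degree P = c" unfolding P_def
  proof (subst degree_add_eq_right)
    have "degree (monom (1::complex) (a*i) * Q ^ j) = a*i + j*b"
      using Q0 by (subst degree_mult_eq) (auto simp: degree_monom_eq degree_power_eq dQ)
    then show "degree [:0::complex,1:] < degree (monom 1 (a*i) * Q ^ j)"
      and "degree (monom (1::complex) (a*i) * Q ^ j) = c" using c1 cij by (auto simp: mult.commute)
  qed
  have d3: "tdeg (\<lambda>v. snd (snd (F v))) = c"
    unfolding f3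
  proof (rule tdeg_polyle[where u=0 and v=1 and w=1 and p=P])
    have "polyle (\<lambda>v. (fst v + fst (snd v) ^ a) ^ i * (fst (snd v) + snd (snd v) ^ b) ^ j) (a * i + b * j)"
    proof (rule polyle_mult; rule polyle_pow; rule polyle_add)
      show "polyle fst a" using polyle_mono[OF polyle_x] assms by simp
      show "polyle (\<lambda>v. fst (snd v) ^ a) a" using polyle_pow[OF polyle_y, of a] by simp
      show "polyle (\<lambda>v. fst (snd v)) b" using polyle_mono[OF polyle_y] assms by simp
      show "polyle (\<lambda>v. snd (snd v) ^ b) b" using polyle_pow[OF polyle_z, of b] by simp
    qed
    then show "polyle (\<lambda>v. snd (snd v) + (fst v + fst (snd v) ^ a) ^ i * (fst (snd v) + snd (snd v) ^ b) ^ j) c"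
      using polyle_add[OF polyle_mono[OF polyle_z]] c1 cij by simp
    show "\<And>t. snd (snd (t * 0, t * 1, t * 1)) + (fst (t * 0, t * 1, t * 1) + fst (snd (t * 0, t * 1, t * 1)) ^ a) ^ i *
          (fst (snd (t * 0, t * 1, t * 1)) + snd (snd (t * 0, t * 1, t * 1)) ^ b) ^ j = poly P t"
      by (simp add: P_def Q_def poly_monom power_mult)
  qed (rule dP)
  have "mdeg F = (a, b, c)" unfolding mdeg_def using d1 d2 d3 by simp
  then show ?thesis using tm FE by blast
qed

end
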